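(* Let $\mathcal A$ be a complex unital algebra which is purely infinite. Then $\mathcal A$ is (1) simple, i.e. its only two-sided ideals are $\{0\}$ and $\mathcal A$; and (2) properly infinite, i.e. there exist idempotents $p,q\in\mathcal A$ with $p\sim 1_{\mathcal A}$, $q\sim 1_{\mathcal A}$ and $p\perp q$.
   Context: A complex unital algebra $\mathcal A$ is purely infinite if it is not a division algebra and for every non-zero $a\in\mathcal A$ there exist $b,c\in\mathcal A$ with $bac=1_{\mathcal A}$. Two idempotents $p,q$ are (algebraically Murray–von Neumann) equivalent, $p\sim q$, if there exist $a,b\in\mathcal A$ with $p=ab$ and $q=ba$. Idempotents $p,q$ are orthogonal, $p\perp q$, if $pq=0=qp$. *)

theory Defs
  imports Complex_Main
begin

class complex_algebra_1 = ring_1 +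
  fixes scaleC :: "complex \<Rightarrow> 'a \<Rightarrow> 'a"
  assumes scaleC_add_right: "scaleC c (x + y) = scaleC c x + scaleC c y"
    and scaleC_add_left: "scaleC (c + d) x = scaleC c x + scaleC d x"
    and scaleC_scaleC: "scaleC c (scaleC d x) = scaleC (c * d) x"
    and scaleC_one: "scaleC 1 x = x"
    and scaleC_mult_left: "scaleC c x * y = scaleC c (x * y)"
    and scaleC_mult_right: "x * scaleC c y = scaleC c (x * y)"

definition is_division_algebra :: "'a::complex_algebra_1 itself \<Rightarrow> bool" where
  "is_division_algebra _ \<longleftrightarrow> (1::'a) \<noteq> 0 \<and>
     (\<forall>a::'a. a \<noteq> 0 \<longrightarrow> (\<exists>b. a * b = 1 \<and> b * a = 1))"

definition purely_infinite :: "'a::complex_algebra_1 itself \<Rightarrow> bool" where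
  "purely_infinite T \<longleftrightarrow> \<not> is_division_algebra T \<and>
     (\<forall>a::'a. a \<noteq> 0 \<longrightarrow> (\<exists>b c. b * a * c = 1))"

definition alg_ideal :: "'a::complex_algebra_1 set \<Rightarrow> bool" where
  "alg_ideal I \<longleftrightarrow> 0 \<in> I \<and> (\<forall>x\<in>I. \<forall>y\<in>I. x + y \<in> I) \<and> (\<forall>x\<in>I. - x \<in> I) \<and>
     (\<forall>c. \<forall>x\<in>I. scaleC c x \<in> I) \<and> (\<forall>a. \<forall>x\<in>I. a * x \<in> I \<and> x * a \<in> I)"

definition simple_algebra :: "'a::complex_algebra_1 itself \<Rightarrow> bool" where
  "simple_algebra _ \<longleftrightarrow> (\<forall>I::'a set. alg_ideal I \<longrightarrow> I = {0} \<or> I = UNIV)"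

definition idempotent :: "'a::complex_algebra_1 \<Rightarrow> bool" where
  "idempotent p \<longleftrightarrow> p * p = p"

definition mvn_equiv :: "'a::complex_algebra_1 \<Rightarrow> 'a \<Rightarrow> bool" where
  "mvn_equiv p q \<longleftrightarrow> (\<exists>a b. p = a * b \<and> q = b * a)"

definition orthogonal :: "'a::complex_algebra_1 \<Rightarrow> 'a \<Rightarrow> bool" where
  "orthogonal p q \<longleftrightarrow> p * q = 0 \<and> q * p = 0"

definition properly_infinite :: "'a::complex_algebra_1 itself \<Rightarrow> bool" where
  "properly_infinite _ \<longleftrightarrow> (\<exists>p q::'a. idempotent p \<and> idempotent q \<and>
     mvn_equiv p 1 \<and> mvn_equiv q 1 \<and> orthogonal p q)"

end

theory Submission
  imports Defs
begin

theorem lemma1p2: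
  assumes "purely_infinite TYPE('a::complex_algebra_1)"
  shows "simple_algebra TYPE('a) \<and> properly_infinite TYPE('a)"
proof
  have nd: "\<not> is_division_algebra TYPE('a)" and pi: "\<And>a::'a. a \<noteq> 0 \<Longrightarrow> \<exists>b c. b * a * c = 1"
    using assms unfolding purely_infinite_def by auto
  show "simple_algebra TYPE('a)"
    unfolding simple_algebra_def
  proof (intro allI impI)
    fix I :: "'a set" assume I: "alg_ideal I"
    show "I = {0} \<or> I = UNIV"
    proof (cases "\<exists>x\<in>I. x \<noteq> 0")
      case True
      then obtain x where x: "x \<in> I" "x \<noteq> 0" by blast
      then obtain b c where bc: "b * x * c = 1" using pi by blast
      have "b * x \<in> I" using I x unfolding alg_ideal_def by blast
      hence "b * x * c \<in> I" using I unfolding alg_ideal_def by blast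
      hence one: "1 \<in> I" using bc by simp
      have "\<forall>a. a \<in> I"
      proof
        fix a :: 'a have "a * 1 \<in> I" using I one unfolding alg_ideal_def by blast
        thus "a \<in> I" by simp
      qed
      thus ?thesis by blast
    next
      case False
      thus ?thesis using I unfolding alg_ideal_def by blast
    qed
  qed
  show "properly_infinite TYPE('a)"
  proof (cases "(1::'a) = 0")
    case True
    hence z: "\<And>x::'a. x = 0" by (metis mult_1_left mult_zero_left)
    show ?thesis unfolding properly_infinite_def idempotent_def mvn_equiv_def orthogonal_def
      by (rule exI[of _ 0], rule exI[of _ 0]) (metis z)
  next
    case False
    then obtain a :: 'a where a: "a \<noteq> 0" "\<not> (\<exists>b. a * b = 1 \<and> b * a = 1)"
      using nd unfolding is_division_algebra_def by blast
    obtain b c where bc: "b * a * c = 1" using pi a(1) by blast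
    have "\<exists>x y::'a. x * y = 1 \<and> y * x \<noteq> 1"
    proof (rule ccontr)
      assume "\<not> ?thesis"
      hence df: "\<And>x y::'a. x * y = 1 \<Longrightarrow> y * x = 1" by blast
      have 1: "c * (b * a) = 1" using df[of "b*a" c] bc by simp
      have 2: "a * c * b = 1" using df[of b "a*c"] bc by (simp add: mult.assoc)
      have "a * (c * b) = 1 \<and> (c * b) * a = 1" using 1 2 by (simp add: mult.assoc)
      thus False using a(2) by blast
    qed
    then obtain x y :: 'a where xy: "x * y = 1" "y * x \<noteq> 1" by blast
    define e where "e = 1 - y * x"
    have yxyx: "y * x * (y * x) = y * x" by (metis mult.assoc xy(1) mult_1_right)
    have e0: "e \<noteq> 0" using xy(2) unfolding e_def by simp
    have ee: "e * e = e" unfolding e_def using yxyx by (simp add: algebra_simps)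
    have yxe: "y * x * e = 0" unfolding e_def using yxyx by (simp add: algebra_simps)
    have eyx: "e * (y * x) = 0" unfolding e_def using yxyx by (simp add: algebra_simps)
    obtain b' c' where bc': "b' * e * c' = 1" using pi e0 by blast
    define u where "u = e * c'"
    define v where "v = b' * e"
    have vu: "v * u = 1" unfolding u_def v_def using bc' ee by (metis mult.assoc)
    have idq: "u * v * (u * v) = u * v" using vu by (metis mult.assoc mult_1_left)
    have pq: "y * x * (u * v) = 0" unfolding u_def by (metis mult.assoc yxe mult_zero_left)
    have qp: "u * v * (y * x) = 0" unfolding v_def by (metis mult.assoc eyx mult_zero_right)
    show ?thesis unfolding properly_infinite_def idempotent_def mvn_equiv_def orthogonal_def
      apply (rule exI[of _ "y * x"], rule exI[of _ "u * v"])
      using yxyx idq pq qp xy(1) vu by (metis (no_types))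
  qed
qed

end
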